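(* Let $\tilde L$ be a minimum-size counterexample. Then every join-irreducible element $j$ of $\tilde L$ satisfies $|{\uparrow}j|>\ell(\tilde L)$.
   Context: The length $\ell(L)$ of a finite lattice $L$ is one less than the maximum number of elements of a chain (totally ordered subset) in $L$. For a poset $P$, $x$ upper covers $y$ if $y<x$ with nothing strictly between; join-irreducible: upper covers exactly one element. For $x\in P$, ${\uparrow}x=\{y: x\le y\}$. A counterexample is a finite lattice $L$ with $|L|>1$ in which every join-irreducible $j$ satisfies $|{\uparrow}j|>|L|/2$; a minimum-size counterexample is a counterexample $\tilde L$ such that no counterexample has fewer elements. *)

theory Defs
  imports Main
begin

definition is_lub :: "'a set \<Rightarrow> ('a \<Rightarrow> 'a \<Rightarrow> bool) \<Rightarrow> 'a \<Rightarrow> 'a \<Rightarrow> 'a \<Rightarrow> bool" where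
  "is_lub L le x y z \<longleftrightarrow> z \<in> L \<and> le x z \<and> le y z \<and>
     (\<forall>w\<in>L. le x w \<and> le y w \<longrightarrow> le z w)"

definition is_glb :: "'a set \<Rightarrow> ('a \<Rightarrow> 'a \<Rightarrow> bool) \<Rightarrow> 'a \<Rightarrow> 'a \<Rightarrow> 'a \<Rightarrow> bool" where
  "is_glb L le x y z \<longleftrightarrow> z \<in> L \<and> le z x \<and> le z y \<and>
     (\<forall>w\<in>L. le w x \<and> le w y \<longrightarrow> le w z)"

definition finite_lattice :: "'a set \<Rightarrow> ('a \<Rightarrow> 'a \<Rightarrow> bool) \<Rightarrow> bool" where
  "finite_lattice L le \<longleftrightarrow> finite L \<and> L \<noteq> {} \<and>
     (\<forall>x\<in>L. le x x) \<and>
     (\<forall>x\<in>L. \<forall>y\<in>L. le x y \<and> le y x \<longrightarrow> x = y) \<and>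
     (\<forall>x\<in>L. \<forall>y\<in>L. \<forall>z\<in>L. le x y \<and> le y z \<longrightarrow> le x z) \<and>
     (\<forall>x\<in>L. \<forall>y\<in>L. (\<exists>z. is_lub L le x y z) \<and> (\<exists>z. is_glb L le x y z))"

definition lt :: "('a \<Rightarrow> 'a \<Rightarrow> bool) \<Rightarrow> 'a \<Rightarrow> 'a \<Rightarrow> bool" where
  "lt le x y \<longleftrightarrow> le x y \<and> x \<noteq> y"

definition upper_covers :: "'a set \<Rightarrow> ('a \<Rightarrow> 'a \<Rightarrow> bool) \<Rightarrow> 'a \<Rightarrow> 'a \<Rightarrow> bool" where
  "upper_covers L le x y \<longleftrightarrow> x \<in> L \<and> y \<in> L \<and> lt le y x \<and>
     \<not> (\<exists>z\<in>L. lt le y z \<and> lt le z x)"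

definition join_irreducible :: "'a set \<Rightarrow> ('a \<Rightarrow> 'a \<Rightarrow> bool) \<Rightarrow> 'a \<Rightarrow> bool" where
  "join_irreducible L le x \<longleftrightarrow> x \<in> L \<and> card {y \<in> L. upper_covers L le x y} = 1"

definition up_set :: "'a set \<Rightarrow> ('a \<Rightarrow> 'a \<Rightarrow> bool) \<Rightarrow> 'a \<Rightarrow> 'a set" where
  "up_set L le x = {y \<in> L. le x y}"

definition is_chain :: "'a set \<Rightarrow> ('a \<Rightarrow> 'a \<Rightarrow> bool) \<Rightarrow> 'a set \<Rightarrow> bool" where
  "is_chain L le C \<longleftrightarrow> C \<subseteq> L \<and> (\<forall>x\<in>C. \<forall>y\<in>C. le x y \<or> le y x)"

definition lattice_length :: "'a set \<Rightarrow> ('a \<Rightarrow> 'a \<Rightarrow> bool) \<Rightarrow> nat" where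
  "lattice_length L le = Max {card C | C. is_chain L le C} - 1"

definition counterexample :: "'a set \<Rightarrow> ('a \<Rightarrow> 'a \<Rightarrow> bool) \<Rightarrow> bool" where
  "counterexample L le \<longleftrightarrow> finite_lattice L le \<and> card L > 1 \<and>
     (\<forall>j. join_irreducible L le j \<longrightarrow> 2 * card (up_set L le j) > card L)"

text \<open>Minimality is measured against all counterexamples; every finite lattice is
  isomorphic to one carried by a set of naturals, so quantifying over lattices on nat
  covers all finite lattices up to isomorphism.\<close>
definition min_counterexample :: "'a set \<Rightarrow> ('a \<Rightarrow> 'a \<Rightarrow> bool) \<Rightarrow> bool" where
  "min_counterexample L le \<longleftrightarrow> counterexample L le \<and>
     (\<forall>(M :: nat set) leM. counterexample M leM \<longrightarrow> card L \<le> card M)"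

end

theory Submission imports Defs begin
lemma fin_min:
  assumes "finite S" "S \<noteq> {}" "S \<subseteq> L"
    and anti: "\<forall>x\<in>L. \<forall>y\<in>L. le x y \<and> le y x \<longrightarrow> x = y"
    and tr: "\<forall>x\<in>L. \<forall>y\<in>L. \<forall>z\<in>L. le x y \<and> le y z \<longrightarrow> le x z"
  shows "\<exists>m\<in>S. \<forall>y\<in>S. \<not> lt le y m"
  using assms(1,2,3)
proof (induction S rule: finite_ne_induct)
  case (singleton x)
  then show ?case by (simp add: lt_def)
next
  case (insert x F)
  then obtain m where m: "m \<in> F" "\<forall>y\<in>F. \<not> lt le y m" by auto
  have xL: "x \<in> L" and FL: "F \<subseteq> L" using insert.prems by auto
  show ?case
  proof (cases "lt le x m")
    case True
    have "\<forall>y\<in>insert x F. \<not> lt le y x"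
    proof
      fix y assume y: "y \<in> insert x F"
      show "\<not> lt le y x"
      proof
        assume yx: "lt le y x"
        then have yF: "y \<in> F" using y by (auto simp: lt_def)
        have yL: "y \<in> L" and mL: "m \<in> L" using yF m FL by auto
        have "le y x" "le x m" using yx True by (simp_all add: lt_def)
        hence ym: "le y m" using tr yL xL mL by blast
        have "y \<noteq> m"
        proof
          assume "y = m"
          hence "le m x" using \<open>le y x\<close> by simp
          hence "x = m" using anti xL mL \<open>le x m\<close> by blast
          thus False using True by (simp add: lt_def)
        qed
        hence "lt le y m" using ym by (simp add: lt_def)
        thus False using m yF by blast
      qed
    qed
    then show ?thesis by blast
  next
    case False
    have "\<forall>y\<in>insert x F. \<not> lt le y m" using False m by blast
    then show ?thesis using m by blast
  qed
qed
theorem theorem2p7: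
  fixes L :: "'a set" and le :: "'a \<Rightarrow> 'a \<Rightarrow> bool"
  assumes "min_counterexample L le"
  shows "\<forall>j. join_irreducible L le j \<longrightarrow> card (up_set L le j) > lattice_length L le"
proof -
  have ce: "counterexample L le" using assms by (simp add: min_counterexample_def)
  have fl: "finite_lattice L le" using ce by (simp add: counterexample_def)
  have fin: "finite L" and refl: "\<forall>x\<in>L. le x x"
    and anti: "\<forall>x\<in>L. \<forall>y\<in>L. le x y \<and> le y x \<longrightarrow> x = y"
    and tr: "\<forall>x\<in>L. \<forall>y\<in>L. \<forall>z\<in>L. le x y \<and> le y z \<longrightarrow> le x z"
    and lat: "\<forall>x\<in>L. \<forall>y\<in>L. (\<exists>z. is_lub L le x y z) \<and> (\<exists>z. is_glb L le x y z)"
    using fl unfolding finite_lattice_def by blast+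
  have trI: "\<And>x y z. x \<in> L \<Longrightarrow> y \<in> L \<Longrightarrow> z \<in> L \<Longrightarrow> le x y \<Longrightarrow> le y z \<Longrightarrow> le x z"
    using tr by blast
  have antiI: "\<And>x y. x \<in> L \<Longrightarrow> y \<in> L \<Longrightarrow> le x y \<Longrightarrow> le y x \<Longrightarrow> x = y"
    using anti by blast
  have big: "\<forall>j. join_irreducible L le j \<longrightarrow> 2 * card (up_set L le j) > card L"
    using ce by (simp add: counterexample_def)
  define CS where "CS = {card C | C. is_chain L le C}"
  have CSsub: "CS \<subseteq> {..card L}"
  proof
    fix k assume "k \<in> CS"
    then obtain D where "k = card D" "is_chain L le D" unfolding CS_def by blast
    hence "D \<subseteq> L" "k = card D" by (auto simp: is_chain_def)
    thus "k \<in> {..card L}" using card_mono[OF fin] by simp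
  qed
  have CSfin: "finite CS" using CSsub finite_subset by blast
  have "is_chain L le {}" by (simp add: is_chain_def)
  hence CSne: "CS \<noteq> {}" unfolding CS_def by blast
  have "Max CS \<in> CS" using CSfin CSne by simp
  then obtain C where C: "is_chain L le C" "card C = Max CS" unfolding CS_def by auto
  have len: "lattice_length L le = card C - 1"
    unfolding lattice_length_def using C(2) CS_def by simp
  have CL: "C \<subseteq> L" using C(1) by (simp add: is_chain_def)
  have Cfin: "finite C" using CL fin finite_subset by blast
  have cmp: "\<forall>x\<in>C. \<forall>y\<in>C. le x y \<or> le y x" using C(1) by (simp add: is_chain_def)
  show ?thesis
  proof (cases "card C \<le> 1")
    case True
    show ?thesis
    proof (intro allI impI)
      fix j assume "join_irreducible L le j"
      hence "j \<in> up_set L le j" using refl by (auto simp: join_irreducible_def up_set_def)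
      moreover have "finite (up_set L le j)" using fin by (simp add: up_set_def)
      ultimately have "card (up_set L le j) > 0" by (auto simp: card_gt_0_iff)
      thus "card (up_set L le j) > lattice_length L le" using len True by simp
    qed
  next
    case False
    hence Cne: "C \<noteq> {}" by auto
    define fle where "fle = (\<lambda>x y. le y x)"
    have anti': "\<forall>x\<in>L. \<forall>y\<in>L. fle x y \<and> fle y x \<longrightarrow> x = y" using anti by (auto simp: fle_def)
    have tr': "\<forall>x\<in>L. \<forall>y\<in>L. \<forall>z\<in>L. fle x y \<and> fle y z \<longrightarrow> fle x z" unfolding fle_def using trI by blast
    obtain t where t: "t \<in> C" "\<forall>y\<in>C. \<not> lt fle y t"
      using fin_min[OF Cfin Cne CL anti' tr'] by blast
    have tC: "\<forall>y\<in>C. le y t"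
      using t cmp by (auto simp: lt_def fle_def)
    have C'ne: "C - {t} \<noteq> {}"
      proof
      assume "C - {t} = {}"
      hence "C \<subseteq> {t}" by blast
      hence "card C \<le> 1" using card_mono[of "{t}" C] by simp
      thus False using False by simp
    qed
    obtain c where c: "c \<in> C - {t}" "\<forall>y\<in>C - {t}. \<not> lt fle y c"
    proof -
      have "C - {t} \<subseteq> L" using CL by blast
      moreover have "finite (C - {t})" using Cfin by blast
      ultimately show ?thesis using fin_min[of "C - {t}" L fle, OF _ C'ne _ anti' tr'] that by blast
    qed
    have cC: "\<forall>y\<in>C. y \<noteq> t \<longrightarrow> le y c"
      using c cmp by (auto simp: lt_def fle_def)
    have cL: "c \<in> L" "t \<in> L" using c t CL by auto
    define S where "S = {x \<in> L. \<not> le x c}"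
    have tS: "t \<in> S"
      unfolding S_def using cL c tC antiI by auto
    obtain m where m: "m \<in> S" "\<forall>y\<in>S. \<not> lt le y m"
    proof -
      have "S \<subseteq> L" by (auto simp: S_def)
      moreover have "finite S" using fin calculation finite_subset by blast
      moreover have "S \<noteq> {}" using tS by blast
      ultimately show ?thesis using fin_min[of S L le, OF _ _ _ anti tr] that by blast
    qed
    have mL: "m \<in> L" and mc: "\<not> le m c" using m by (auto simp: S_def)
    have below: "\<And>y. y \<in> L \<Longrightarrow> lt le y m \<Longrightarrow> le y c"
      using m by (auto simp: S_def)
    obtain z where z: "is_glb L le m c z" using lat mL cL by blast
    have zL: "z \<in> L" and zm: "lt le z m"
      using z mc by (auto simp: is_glb_def lt_def)
    define B where "B = {y \<in> L. lt le y m}"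
    have Bfin: "finite B" using fin by (simp add: B_def)
    have Bne: "B \<noteq> {}" using zL zm by (auto simp: B_def)
    obtain a where a: "a \<in> B" "\<forall>y\<in>B. \<not> lt fle y a"
    proof -
      have "B \<subseteq> L" by (auto simp: B_def)
      thus ?thesis using fin_min[of B L fle, OF Bfin Bne _ anti' tr'] that by blast
    qed
    have aL: "a \<in> L" and am: "lt le a m" using a by (auto simp: B_def)
    have acov: "upper_covers L le m a"
      unfolding upper_covers_def
    proof (intro conjI)
      show "\<not> (\<exists>w\<in>L. lt le a w \<and> lt le w m)"
      proof
        assume "\<exists>w\<in>L. lt le a w \<and> lt le w m"
        then obtain w where "w \<in> L" "lt le a w" "lt le w m" by blast
        hence "w \<in> B" "lt fle w a" by (auto simp: B_def lt_def fle_def)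
        thus False using a by blast
      qed
    qed (use mL aL am in auto)
    have uniq: "\<And>b. upper_covers L le m b \<Longrightarrow> b = a"
    proof -
      fix b assume bcov: "upper_covers L le m b"
      show "b = a"
      proof (rule ccontr)
      assume ba: "b \<noteq> a"
      have bL: "b \<in> L" and bm: "lt le b m" using bcov by (auto simp: upper_covers_def)
      have ac: "le a c" using below aL am by blast
      have bc: "le b c" using below bL bm by blast
      obtain u where u: "is_lub L le a b u" using lat aL bL by blast
      have uL: "u \<in> L" and au: "le a u" and bu: "le b u" using u by (auto simp: is_lub_def)
      have um: "le u m" using u mL am bm by (auto simp: is_lub_def lt_def)
      have uc: "le u c" using u cL ac bc by (auto simp: is_lub_def)
      have umne: "u \<noteq> m" using uc mc by auto
      show False
      proof (cases "a = u")
        case True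
        then have "lt le b a" using bu ba by (auto simp: lt_def)
        moreover have "lt le a m" using am .
        ultimately show False using bcov aL by (auto simp: upper_covers_def)
      next
        case False
        then have "lt le a u" "lt le u m" using au um umne by (auto simp: lt_def)
        then show False using acov uL by (auto simp: upper_covers_def)
      qed
      qed
    qed
    have e: "{y \<in> L. upper_covers L le m y} = {a}"
    proof (rule set_eqI)
      fix y show "y \<in> {y \<in> L. upper_covers L le m y} \<longleftrightarrow> y \<in> {a}"
        using uniq[of y] acov aL by blast
    qed
    have jm: "join_irreducible L le m" unfolding join_irreducible_def e using mL by simp
    have upsub: "up_set L le m \<subseteq> (L - C) \<union> {t}"
    proof
      fix y assume y: "y \<in> up_set L le m"
      hence yL: "y \<in> L" and my: "le m y" by (auto simp: up_set_def)
      show "y \<in> (L - C) \<union> {t}"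
      proof (cases "y \<in> C \<and> y \<noteq> t")
        case True
        hence "le y c" using cC by blast
        hence "le m c" using trI mL yL cL my by blast
        thus ?thesis using mc by blast
      next
        case False
        thus ?thesis using yL by auto
      qed
    qed
    have "card (up_set L le m) \<le> card ((L - C) \<union> {t})"
      using upsub fin by (intro card_mono) auto
    also have "\<dots> \<le> card (L - C) + 1"
      using card_Un_le[of "L - C" "{t}"] by simp
    also have "card (L - C) = card L - card C"
      using CL Cfin by (simp add: card_Diff_subset)
    finally have ub: "card (up_set L le m) \<le> card L - card C + 1" .
    have cCL: "card C \<le> card L" using CL fin card_mono by blast
    have "2 * card (up_set L le m) > card L" using big jm by blast
    hence Lbig: "card L > 2 * (card C - 1)" using ub cCL False by linarith
    show ?thesis
    proof (intro allI impI)
      fix j assume "join_irreducible L le j"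
      hence "2 * card (up_set L le j) > card L" using big by blast
      thus "card (up_set L le j) > lattice_length L le" using Lbig len by linarith
    qed
  qed
qed

end
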